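(* Let $\mathcal{P}$ be a nonempty finite poset, $m=\max_{p\in\mathcal{P}}(|{\downarrow}p|+|{\uparrow}p|)$, and let $\mathcal{A},\mathcal{B}$ be nonempty dual families of downsets over $\mathcal{L}(\mathcal{P})$, with $N=|\mathcal{A}|+|\mathcal{B}|$. Then at least one of the following holds: (i) there is $p\in\mathcal{P}$ with $\mathrm{freq}_{\mathcal{A}}(p)\ge\frac{1}{m\log_{4/3}N}$; (ii) there is $p\in\mathcal{P}$ with $\mathrm{freq}_{\overline{\mathcal{B}}}(p)\ge\frac{1}{m^2\log_{4/3}N}$.
   Context: For a finite poset $\mathcal{P}$, $\mathcal{L}(\mathcal{P})$ is the lattice of all downsets of $\mathcal{P}$ ordered by inclusion. ${\downarrow}p=\{q:q\le p\}$, ${\uparrow}p=\{q:q\ge p\}$. Two families $\mathcal{A},\mathcal{B}$ of downsets of $\mathcal{P}$ are dual over $\mathcal{L}(\mathcal{P})$ if $A\not\subseteq B$ for all $A\in\mathcal{A},B\in\mathcal{B}$, and for every downset $X$ of $\mathcal{P}$ either $X\subseteq B$ for some $B\in\mathcal{B}$ or $A\subseteq X$ for some $A\in\mathcal{A}$. For a family $\mathcal{C}$ of subsets of $\mathcal{P}$, $\mathrm{freq}_{\mathcal{C}}(p)=|\{C\in\mathcal{C}:p\in C\}|/|\mathcal{C}|$, and $\overline{\mathcal{C}}=\{\mathcal{P}\setminus C: C\in\mathcal{C}\}$, so $\mathrm{freq}_{\overline{\mathcal{B}}}(p)=|\{B\in\mathcal{B}:p\notin B\}|/|\mathcal{B}|$.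 *)

theory Defs
  imports Main "HOL-Library.Log_Nat" Complex_Main
begin

definition partial_order_on_set :: "'a set \<Rightarrow> ('a \<Rightarrow> 'a \<Rightarrow> bool) \<Rightarrow> bool" where
  "partial_order_on_set P le \<longleftrightarrow>
     (\<forall>x\<in>P. le x x) \<and>
     (\<forall>x\<in>P. \<forall>y\<in>P. le x y \<and> le y x \<longrightarrow> x = y) \<and>
     (\<forall>x\<in>P. \<forall>y\<in>P. \<forall>z\<in>P. le x y \<and> le y z \<longrightarrow> le x z)"

definition is_downset :: "'a set \<Rightarrow> ('a \<Rightarrow> 'a \<Rightarrow> bool) \<Rightarrow> 'a set \<Rightarrow> bool" where
  "is_downset P le D \<longleftrightarrow> D \<subseteq> P \<and> (\<forall>x\<in>D. \<forall>y\<in>P. le y x \<longrightarrow> y \<in> D)"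

definition down :: "'a set \<Rightarrow> ('a \<Rightarrow> 'a \<Rightarrow> bool) \<Rightarrow> 'a \<Rightarrow> 'a set" where
  "down P le p = {q\<in>P. le q p}"

definition up :: "'a set \<Rightarrow> ('a \<Rightarrow> 'a \<Rightarrow> bool) \<Rightarrow> 'a \<Rightarrow> 'a set" where
  "up P le p = {q\<in>P. le p q}"

definition dual_over :: "'a set \<Rightarrow> ('a \<Rightarrow> 'a \<Rightarrow> bool) \<Rightarrow> 'a set set \<Rightarrow> 'a set set \<Rightarrow> bool" where
  "dual_over P le \<A> \<B> \<longleftrightarrow>
     (\<forall>A\<in>\<A>. \<forall>B\<in>\<B>. \<not> A \<subseteq> B) \<and>
     (\<forall>X. is_downset P le X \<longrightarrow> (\<exists>B\<in>\<B>. X \<subseteq> B) \<or> (\<exists>A\<in>\<A>. A \<subseteq> X))"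

definition freq :: "'a set set \<Rightarrow> 'a \<Rightarrow> real" where
  "freq \<C> p = real (card {C\<in>\<C>. p \<in> C}) / real (card \<C>)"

definition compl_family :: "'a set \<Rightarrow> 'a set set \<Rightarrow> 'a set set" where
  "compl_family P \<C> = (\<lambda>C. P - C) ` \<C>"

end

theory Submission
  imports Defs
begin


definition wt :: "real \<Rightarrow> 'a set \<Rightarrow> 'a set \<Rightarrow> real" where
  "wt b S Z = (1-b)^card Z * b^card (S - Z)"

lemma wt_split:
  assumes "finite S" "U \<subseteq> S"
  shows "(\<Sum>Z\<in>Pow S. wt b S Z * (f (Z \<inter> U) * g (Z - U))) =
         (\<Sum>X\<in>Pow U. wt b U X * f X) * (\<Sum>Y\<in>Pow (S-U). wt b (S-U) Y * g Y)"
proof -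
  have bij: "bij_betw (\<lambda>(X,Y). X \<union> Y) (Pow U \<times> Pow (S-U)) (Pow S)"
    by (rule bij_betw_byWitness[where f'="\<lambda>Z. (Z \<inter> U, Z - U)"]) (use assms in auto)
  have fU: "finite U" using assms finite_subset by blast
  have eq: "wt b S (X \<union> Y) * (f ((X \<union> Y) \<inter> U) * g ((X \<union> Y) - U))
      = wt b U X * f X * (wt b (S-U) Y * g Y)" if "X \<subseteq> U" "Y \<subseteq> S - U" for X Y
  proof -
    have fX: "finite X" "finite Y" using that fU assms(1) by (auto intro: finite_subset)
    have c1: "card (X \<union> Y) = card X + card Y"
      using that fX by (intro card_Un_disjoint) auto
    have "S - (X \<union> Y) = (U - X) \<union> ((S - U) - Y)" using that assms by auto
    moreover have "card ((U - X) \<union> ((S - U) - Y)) = card (U - X) + card ((S-U) - Y)"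
      using fU assms(1) by (intro card_Un_disjoint) auto
    ultimately have c2: "card (S - (X \<union> Y)) = card (U - X) + card ((S-U) - Y)" by simp
    have s1: "(X \<union> Y) \<inter> U = X" "(X \<union> Y) - U = Y" using that by auto
    show ?thesis unfolding wt_def c1 c2 s1 by (simp add: power_add mult_ac)
  qed
  have "(\<Sum>X\<in>Pow U. wt b U X * f X) * (\<Sum>Y\<in>Pow (S-U). wt b (S-U) Y * g Y)
      = (\<Sum>(X,Y)\<in>Pow U \<times> Pow (S-U). wt b U X * f X * (wt b (S-U) Y * g Y))"
    by (simp add: sum_product sum.cartesian_product)
  also have "\<dots> = (\<Sum>p\<in>Pow U \<times> Pow (S-U). (\<lambda>Z. wt b S Z * (f (Z \<inter> U) * g (Z - U))) ((\<lambda>(X,Y). X \<union> Y) p))"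
    by (rule sum.cong) (auto simp: eq)
  also have "\<dots> = (\<Sum>Z\<in>Pow S. wt b S Z * (f (Z \<inter> U) * g (Z - U)))"
    by (rule sum.reindex_bij_betw[OF bij])
  finally show ?thesis by simp
qed

lemma wt_sum1: "finite S \<Longrightarrow> (\<Sum>Z\<in>Pow S. wt b S Z) = 1"
proof (induction S rule: finite_induct)
  case empty then show ?case by (simp add: wt_def)
next
  case (insert x S)
  have "(\<Sum>Z\<in>Pow (insert x S). wt b (insert x S) Z * ((\<lambda>_. 1) (Z \<inter> {x}) * (\<lambda>_. 1) (Z - {x})))
     = (\<Sum>X\<in>Pow {x}. wt b {x} X * 1) * (\<Sum>Y\<in>Pow (insert x S - {x}). wt b (insert x S - {x}) Y * 1)"
    using insert by (intro wt_split) auto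
  moreover have "insert x S - {x} = S" using insert by auto
  moreover have "(\<Sum>X\<in>Pow {x}. wt b {x} X) = 1"
    by (simp add: Pow_singleton_iff wt_def Pow_insert)
  ultimately show ?case using insert by simp
qed

lemma wt_nonneg: "0 \<le> b \<Longrightarrow> b \<le> 1 \<Longrightarrow> 0 \<le> wt b S Z"
  by (simp add: wt_def)

lemma wt_subset:
  assumes "finite S" "B \<subseteq> S"
  shows "(\<Sum>Z\<in>Pow S. wt b S Z * (if Z \<subseteq> B then 1 else 0)) = b ^ card (S - B)"
proof -
  have "(\<Sum>Z\<in>Pow S. wt b S Z * ((\<lambda>_. 1) (Z \<inter> B) * (\<lambda>Y. if Y = {} then 1 else 0) (Z - B)))
     = (\<Sum>X\<in>Pow B. wt b B X * 1) * (\<Sum>Y\<in>Pow (S-B). wt b (S-B) Y * (if Y = {} then 1 else 0))"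
    using assms by (intro wt_split) auto
  moreover have "(\<Sum>X\<in>Pow B. wt b B X * 1) = 1" using assms by (simp add: wt_sum1 finite_subset)
  moreover have "(\<Sum>Y\<in>Pow (S-B). wt b (S-B) Y * (if Y = {} then 1 else 0)) = wt b (S-B) {}"
  proof -
    have "(\<Sum>Y\<in>Pow (S-B). wt b (S-B) Y * (if Y = {} then 1 else 0)) = (\<Sum>Y\<in>Pow (S-B). if Y = {} then wt b (S-B) Y else 0)"
      by (rule sum.cong) auto
    also have "\<dots> = wt b (S-B) {}" using assms by (subst sum.delta) auto
    finally show ?thesis .
  qed
  moreover have "Z - B = {} \<longleftrightarrow> Z \<subseteq> B" for Z by auto
  ultimately show ?thesis by (simp add: wt_def)
qed

lemma wt_nonempty:
  assumes "finite U"
  shows "(\<Sum>X\<in>Pow U. wt b U X * (if X \<noteq> {} then 1 else 0)) = 1 - b ^ card U"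
proof -
  have "(\<Sum>X\<in>Pow U. wt b U X * (if X \<noteq> {} then 1 else 0)) = (\<Sum>X\<in>Pow U - {{}}. wt b U X)"
    by (rule sum.mono_neutral_cong_right) (use assms in auto)
  also have "\<dots> = (\<Sum>X\<in>Pow U. wt b U X) - wt b U {}"
    using assms by (subst sum_diff1) auto
  finally show ?thesis using wt_sum1[OF assms] by (simp add: wt_def)
qed

lemma wt_hit:
  assumes "finite T"
  shows "finite S \<Longrightarrow> (\<forall>t\<in>T. U t \<subseteq> S) \<Longrightarrow> (\<forall>t\<in>T. \<forall>t'\<in>T. t \<noteq> t' \<longrightarrow> U t \<inter> U t' = {}) \<Longrightarrow>
    (\<Sum>Z\<in>Pow S. wt b S Z * (if \<forall>t\<in>T. Z \<inter> U t \<noteq> {} then 1 else 0)) = (\<Prod>t\<in>T. 1 - b ^ card (U t))"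
  using assms
proof (induction T arbitrary: S rule: finite_induct)
  case empty then show ?case by (simp add: wt_sum1)
next
  case (insert t T)
  let ?U = "U t"
  have ind: "(if \<forall>t'\<in>insert t T. Z \<inter> U t' \<noteq> {} then 1 else 0) =
      (if Z \<inter> ?U \<noteq> {} then 1 else 0) * (if \<forall>t'\<in>T. (Z - ?U) \<inter> U t' \<noteq> {} then 1 else (0::real))" for Z
  proof -
    have "\<forall>t'\<in>T. Z \<inter> U t' = (Z - ?U) \<inter> U t'"
    proof
      fix t' assume "t' \<in> T"
      then have "U t \<inter> U t' = {}" using insert.prems(3) insert.hyps(2) by auto
      then show "Z \<inter> U t' = (Z - ?U) \<inter> U t'" by blast
    qed
    then show ?thesis by auto
  qed
  have "(\<Sum>Z\<in>Pow S. wt b S Z * (if \<forall>t'\<in>insert t T. Z \<inter> U t' \<noteq> {} then 1 else 0))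
    = (\<Sum>Z\<in>Pow S. wt b S Z * ((\<lambda>X. if X \<noteq> {} then 1 else 0) (Z \<inter> ?U) * (\<lambda>Y. if \<forall>t'\<in>T. Y \<inter> U t' \<noteq> {} then 1 else (0::real)) (Z - ?U)))"
    by (simp only: ind)
  also have "\<dots> = (\<Sum>X\<in>Pow ?U. wt b ?U X * (if X \<noteq> {} then 1 else 0)) *
       (\<Sum>Y\<in>Pow (S - ?U). wt b (S - ?U) Y * (if \<forall>t'\<in>T. Y \<inter> U t' \<noteq> {} then 1 else 0))"
    using insert.prems by (intro wt_split) auto
  also have "(\<Sum>X\<in>Pow ?U. wt b ?U X * (if X \<noteq> {} then 1 else 0)) = 1 - b ^ card ?U"
    using insert.prems finite_subset by (intro wt_nonempty) auto
  also have "(\<Sum>Y\<in>Pow (S - ?U). wt b (S - ?U) Y * (if \<forall>t'\<in>T. Y \<inter> U t' \<noteq> {} then 1 else 0))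
      = (\<Prod>t\<in>T. 1 - b ^ card (U t))"
  proof (rule insert.IH)
    show "finite (S - ?U)" using insert.prems by auto
    show "\<forall>t'\<in>T. U t' \<subseteq> S - ?U"
    proof
      fix t' assume "t' \<in> T"
      then have "U t \<inter> U t' = {}" "U t' \<subseteq> S" using insert.prems(2,3) insert.hyps(2) by auto
      then show "U t' \<subseteq> S - ?U" by blast
    qed
    show "\<forall>t\<in>T. \<forall>t'\<in>T. t \<noteq> t' \<longrightarrow> U t \<inter> U t' = {}" using insert.prems by blast
  qed
  finally show ?case using insert.hyps by simp
qed



lemma greedy:
  fixes R :: "'a \<Rightarrow> 'a \<Rightarrow> bool"
  shows "finite S \<Longrightarrow> (\<forall>x\<in>S. R x x) \<Longrightarrow> (\<forall>x y. R x y \<longrightarrow> R y x) \<Longrightarrow>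
    (\<forall>x\<in>S. card {y\<in>S. R x y} \<le> K) \<Longrightarrow>
    \<exists>T\<subseteq>S. (\<forall>t\<in>T. \<forall>t'\<in>T. t \<noteq> t' \<longrightarrow> \<not> R t t') \<and> card S \<le> K * card T"
proof (induction "card S" arbitrary: S rule: less_induct)
  case less
  show ?case
  proof (cases "S = {}")
    case True then show ?thesis by auto
  next
    case False
    then obtain t where t: "t \<in> S" by auto
    define S' where "S' = S - {y. R t y}"
    have tS': "t \<notin> S'" using t less.prems(2) S'_def by auto
    have sub: "S' \<subseteq> S" unfolding S'_def by auto
    have lt: "card S' < card S" using tS' t sub less.prems(1) by (metis psubset_card_mono psubsetI)
    have "\<forall>x\<in>S'. card {y\<in>S'. R x y} \<le> K"
    proof
      fix x assume "x \<in> S'"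
      then have "card {y\<in>S'. R x y} \<le> card {y\<in>S. R x y}"
        using sub less.prems(1) by (intro card_mono) auto
      then show "card {y\<in>S'. R x y} \<le> K" using less.prems(4) \<open>x \<in> S'\<close> sub by force
    qed
    moreover have fS': "finite S'" using finite_subset[OF sub less.prems(1)] .
    moreover have "\<forall>x\<in>S'. R x x" using less.prems(2) sub by blast
    ultimately obtain T' where T': "T' \<subseteq> S'" "\<forall>t\<in>T'. \<forall>t'\<in>T'. t \<noteq> t' \<longrightarrow> \<not> R t t'" "card S' \<le> K * card T'"
      using less.hyps[OF lt] less.prems(3) by blast
    define T where "T = insert t T'"
    have fT': "finite T'" using finite_subset[OF subset_trans[OF T'(1) sub] less.prems(1)] .
    have tT': "t \<notin> T'" using T'(1) tS' by auto
    have "T \<subseteq> S" using T'(1) sub t T_def by auto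
    moreover have "\<forall>a\<in>T. \<forall>a'\<in>T. a \<noteq> a' \<longrightarrow> \<not> R a a'"
    proof (intro ballI impI)
      fix a a' assume a: "a \<in> T" "a' \<in> T" "a \<noteq> a'"
      show "\<not> R a a'"
      proof (cases "a = t")
        case True
        then have "a' \<in> T'" using a unfolding T_def by auto
        then show ?thesis using T'(1) True unfolding S'_def by auto
      next
        case False
        then have aT: "a \<in> T'" using a unfolding T_def by auto
        show ?thesis
        proof (cases "a' = t")
          case True
          have "\<not> R t a" using aT T'(1) unfolding S'_def by auto
          then show ?thesis using True less.prems(3) by blast
        next
          case False
          then have "a' \<in> T'" using a unfolding T_def by auto
          then show ?thesis using aT T'(2) a(3) by blast
        qed
      qed
    qed
    moreover have "card S \<le> K * card T"
    proof -
      have "S \<subseteq> {y\<in>S. R t y} \<union> S'" unfolding S'_def by auto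
      then have "card S \<le> card ({y\<in>S. R t y} \<union> S')"
        using less.prems(1) S'_def by (intro card_mono) auto
      also have "\<dots> \<le> card {y\<in>S. R t y} + card S'" by (rule card_Un_le)
      also have "\<dots> \<le> K + K * card T'" using less.prems(4) t T'(3) by force
      also have "\<dots> = K * card T" unfolding T_def using fT' tT' by simp
      finally show ?thesis .
    qed
    ultimately show ?thesis by blast
  qed
qed

lemma cover_bound:
  fixes F :: "'b set" and S :: "'c set" and c :: real
  assumes "finite F" "F \<noteq> {}" "finite S" "\<forall>X\<in>F. \<exists>p\<in>S. Q X p"
    and "\<forall>p\<in>S. real (card {X\<in>F. Q X p}) / real (card F) < 1 / c" and "c > 0"
  shows "c < real (card S)"
proof -
  have cF: "real (card F) > 0" using assms(1,2) by (simp add: card_gt_0_iff)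
  have S0: "S \<noteq> {}" using assms(2,4) by auto
  have "F \<subseteq> (\<Union>p\<in>S. {X\<in>F. Q X p})" using assms(4) by auto
  then have "card F \<le> card (\<Union>p\<in>S. {X\<in>F. Q X p})"
    using assms(1,3) by (intro card_mono) auto
  also have "\<dots> \<le> (\<Sum>p\<in>S. card {X\<in>F. Q X p})" by (rule card_UN_le[OF assms(3)])
  finally have "real (card F) \<le> (\<Sum>p\<in>S. real (card {X\<in>F. Q X p}))"
    by (metis of_nat_le_iff of_nat_sum)
  also have "\<dots> < (\<Sum>p\<in>S. real (card F) / c)"
  proof (rule sum_strict_mono[OF assms(3) S0])
    fix p assume "p \<in> S"
    then have "real (card {X\<in>F. Q X p}) / real (card F) < 1 / c" using assms(5) by auto
    then show "real (card {X\<in>F. Q X p}) < real (card F) / c"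
      using cF assms(6) by (simp add: field_simps)
  qed
  also have "\<dots> = real (card S) * real (card F) / c" by simp
  finally have "c * real (card F) < real (card S) * real (card F)"
    using assms(6) by (simp add: field_simps)
  then show ?thesis using cF by simp
qed



theorem corollary4:
  fixes P :: "'a set" and le :: "'a \<Rightarrow> 'a \<Rightarrow> bool"
    and \<A> \<B> :: "'a set set" and m :: nat and N :: nat
  assumes "finite P" and "P \<noteq> {}"
    and "partial_order_on_set P le"
    and "m = Max ((\<lambda>p. card (down P le p) + card (up P le p)) ` P)"
    and "\<forall>A\<in>\<A>. is_downset P le A" and "\<forall>B\<in>\<B>. is_downset P le B"
    and "\<A> \<noteq> {}" and "\<B> \<noteq> {}"
    and "dual_over P le \<A> \<B>"
    and "N = card \<A> + card \<B>"
  shows "(\<exists>p\<in>P. freq \<A> p \<ge> 1 / (real m * log (4/3) (real N))) \<or>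
         (\<exists>p\<in>P. freq (compl_family P \<B>) p \<ge> 1 / ((real m)^2 * log (4/3) (real N)))"
proof (rule ccontr)
  define L where "L = log (4/3) (real N)"
  assume "\<not> ?thesis"
  then have ni: "\<forall>p\<in>P. freq \<A> p < 1 / (real m * L)"
    and nii: "\<forall>p\<in>P. freq (compl_family P \<B>) p < 1 / ((real m)^2 * L)"
    unfolding L_def by (auto simp: not_le)
  have refl: "\<forall>x\<in>P. le x x"
    using assms(3) unfolding partial_order_on_set_def by (rule conjunct1)
  have trans: "\<forall>x\<in>P. \<forall>y\<in>P. \<forall>z\<in>P. le x y \<and> le y z \<longrightarrow> le x z"
    using assms(3) unfolding partial_order_on_set_def by (rule conjunct2[THEN conjunct2])
  have AP: "\<forall>A\<in>\<A>. A \<subseteq> P" and BP: "\<forall>B\<in>\<B>. B \<subseteq> P"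
    using assms(5,6) unfolding is_downset_def by auto
  have fA: "finite \<A>" by (rule finite_subset[of _ "Pow P"]) (use AP assms(1) in auto)
  have fB: "finite \<B>" by (rule finite_subset[of _ "Pow P"]) (use BP assms(1) in auto)
  have cA: "card \<A> \<ge> 1" using fA assms(7) by (simp add: Suc_leI card_gt_0_iff)
  have cB: "card \<B> \<ge> 1" using fB assms(8) by (simp add: Suc_leI card_gt_0_iff)
  have N2: "real N \<ge> 2" using cA cB assms(10) by simp
  have Lpos: "L > 0" unfolding L_def using N2 by simp
  have fdown: "finite (down P le p)" for p using assms(1) unfolding down_def by simp
  have fup: "finite (up P le p)" for p using assms(1) unfolding up_def by simp
  have mge: "card (down P le p) + card (up P le p) \<le> m" if "p \<in> P" for p
    unfolding assms(4) using that assms(1) by (intro Max_ge) auto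
  have down1: "card (down P le p) \<ge> 1" if "p \<in> P" for p
  proof -
    have "p \<in> down P le p" using that refl unfolding down_def by auto
    then have "down P le p \<noteq> {}" by auto
    then show ?thesis using fdown[of p] by (simp add: Suc_le_eq card_gt_0_iff)
  qed
  have up1: "card (up P le p) \<ge> 1" if "p \<in> P" for p
  proof -
    have "p \<in> up P le p" using that refl unfolding up_def by auto
    then have "up P le p \<noteq> {}" by auto
    then show ?thesis using fup[of p] by (simp add: Suc_le_eq card_gt_0_iff)
  qed
  have upm: "card (up P le p) \<le> m" if "p \<in> P" for p using mge[OF that] by simp
  have downm: "card (down P le p) \<le> m" if "p \<in> P" for p using mge[OF that] by simp
  obtain p0 where p0: "p0 \<in> P" using assms(2) by auto
  have m2: "m \<ge> 2" using mge[OF p0] down1[OF p0] up1[OF p0] by simp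
  have mpos: "real m > 0" using m2 by simp
  have hB: "real m * L < real (card (P - B))" if "B \<in> \<B>" for B
  proof (rule cover_bound[where F = \<A> and Q = "\<lambda>A p. p \<in> A"])
    show "finite \<A>" "\<A> \<noteq> {}" "finite (P - B)" using fA assms(7,1) by auto
    show "\<forall>X\<in>\<A>. \<exists>p\<in>P - B. p \<in> X"
    proof
      fix A assume "A \<in> \<A>"
      then have "\<not> A \<subseteq> B" using assms(9) that unfolding dual_over_def by auto
      then show "\<exists>p\<in>P - B. p \<in> A" using AP \<open>A \<in> \<A>\<close> by auto
    qed
    show "\<forall>p\<in>P - B. real (card {X \<in> \<A>. p \<in> X}) / real (card \<A>) < 1 / (real m * L)"
      using ni unfolding freq_def by auto
    show "real m * L > 0" using mpos Lpos by simp
  qed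
  have ccard: "card (compl_family P \<B>) = card \<B>"
    unfolding compl_family_def
    by (rule card_image) (use BP in \<open>auto simp: inj_on_def\<close>)
  have cfreq: "freq (compl_family P \<B>) p = real (card {B\<in>\<B>. p \<notin> B}) / real (card \<B>)" if "p \<in> P" for p
  proof -
    have "{C \<in> compl_family P \<B>. p \<in> C} = (\<lambda>C. P - C) ` {B\<in>\<B>. p \<notin> B}"
      unfolding compl_family_def using that by auto
    moreover have "card ((\<lambda>C. P - C) ` {B\<in>\<B>. p \<notin> B}) = card {B\<in>\<B>. p \<notin> B}"
      by (rule card_image) (use BP in \<open>auto simp: inj_on_def\<close>)
    ultimately show ?thesis unfolding freq_def ccard by simp
  qed
  have hA: "(real m)^2 * L < real (card A)" if "A \<in> \<A>" for A
  proof (rule cover_bound[where F = \<B> and Q = "\<lambda>B p. p \<notin> B"])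
    show "finite \<B>" "\<B> \<noteq> {}" using fB assms(8) by auto
    show "finite A" using AP that assms(1) finite_subset by blast
    show "\<forall>X\<in>\<B>. \<exists>p\<in>A. p \<notin> X"
    proof
      fix B assume "B \<in> \<B>"
      then have "\<not> A \<subseteq> B" using assms(9) that unfolding dual_over_def by auto
      then show "\<exists>p\<in>A. p \<notin> B" by auto
    qed
    show "\<forall>p\<in>A. real (card {X \<in> \<B>. p \<notin> X}) / real (card \<B>) < 1 / ((real m)^2 * L)"
      using nii cfreq AP that by force
    show "(real m)^2 * L > 0" using mpos Lpos by simp
  qed
  define b where "b = (1/2::real) powr (1 / real m)"
  have bpos: "b > 0" unfolding b_def by simp
  have ble: "b \<le> 1" unfolding b_def using mpos by (simp add: powr_le1)
  have bpow: "b ^ k = (1/2) powr (real k / real m)" for k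
    unfolding b_def by (subst powr_power) auto
  have bm: "b ^ m = 1/2" using bpow[of m] mpos by simp
  have pow34: "(3/4::real) powr L = 1 / real N"
  proof -
    have "(3/4::real) = inverse (4/3)" by simp
    then have "(3/4::real) powr L = inverse ((4/3) powr L)" by (simp only: inverse_powr)
    also have "(4/3::real) powr L = real N" unfolding L_def using N2 by (intro powr_log_cancel) auto
    finally show ?thesis by (simp add: field_simps)
  qed
  have halfL: "(1/2::real) powr x < 1 / real N" if "x > L" for x
  proof -
    have "(1/2::real) powr x < (1/2) powr L" using that by (intro powr_less_mono') auto
    also have "\<dots> \<le> (3/4) powr L" using Lpos by (intro powr_mono2) auto
    finally show ?thesis using pow34 by simp
  qed
  define dn where "dn Z = {p\<in>P. \<exists>z\<in>Z. le p z}" for Z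
  have VB: "(\<Sum>Z\<in>Pow P. wt b P Z * (if Z \<subseteq> B then 1 else 0)) < 1 / real N" if "B \<in> \<B>" for B
  proof -
    have "(\<Sum>Z\<in>Pow P. wt b P Z * (if Z \<subseteq> B then 1 else 0)) = b ^ card (P - B)"
      using assms(1) BP that by (intro wt_subset) auto
    also have "\<dots> = (1/2) powr (real (card (P - B)) / real m)" by (rule bpow)
    also have "\<dots> < 1 / real N"
      using hB[OF that] mpos by (intro halfL) (simp add: field_simps)
    finally show ?thesis .
  qed
  have WA: "(\<Sum>Z\<in>Pow P. wt b P Z * (if A \<subseteq> dn Z then 1 else 0)) < 1 / real N" if "A \<in> \<A>" for A
  proof -
    let ?R = "\<lambda>x y. up P le x \<inter> up P le y \<noteq> {}"
    have fAA: "finite A" using AP that assms(1) finite_subset by blast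
    have nb: "card {y\<in>A. ?R x y} \<le> m * m" if "x \<in> A" for x
    proof -
      have xP: "x \<in> P" using that AP \<open>A \<in> \<A>\<close> by auto
      have "{y\<in>A. ?R x y} \<subseteq> (\<Union>s\<in>up P le x. down P le s)"
        using AP \<open>A \<in> \<A>\<close> unfolding up_def down_def by blast
      then have "card {y\<in>A. ?R x y} \<le> card (\<Union>s\<in>up P le x. down P le s)"
        using fdown fup by (intro card_mono) auto
      also have "\<dots> \<le> (\<Sum>s\<in>up P le x. card (down P le s))" by (rule card_UN_le[OF fup])
      also have "\<dots> \<le> (\<Sum>s\<in>up P le x. m)"
        by (rule sum_mono) (auto intro: downm simp: up_def)
      also have "\<dots> = card (up P le x) * m" by simp
      also have "\<dots> \<le> m * m" using upm[OF xP] by simp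
      finally show ?thesis .
    qed
    have "\<exists>T\<subseteq>A. (\<forall>t\<in>T. \<forall>t'\<in>T. t \<noteq> t' \<longrightarrow> \<not> ?R t t') \<and> card A \<le> (m * m) * card T"
    proof (rule greedy[OF fAA])
      show "\<forall>x\<in>A. ?R x x" using AP \<open>A \<in> \<A>\<close> refl unfolding up_def by blast
      show "\<forall>x y. ?R x y \<longrightarrow> ?R y x" by blast
      show "\<forall>x\<in>A. card {y\<in>A. ?R x y} \<le> m * m" using nb by blast
    qed
    then obtain T where T: "T \<subseteq> A" "\<forall>t\<in>T. \<forall>t'\<in>T. t \<noteq> t' \<longrightarrow> \<not> ?R t t'" "card A \<le> (m * m) * card T"
      by blast
    have fT: "finite T" using T(1) fAA finite_subset by blast
    have TP: "T \<subseteq> P" using T(1) AP \<open>A \<in> \<A>\<close> by auto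
    have "(\<Sum>Z\<in>Pow P. wt b P Z * (if A \<subseteq> dn Z then 1 else 0))
        \<le> (\<Sum>Z\<in>Pow P. wt b P Z * (if \<forall>t\<in>T. Z \<inter> up P le t \<noteq> {} then 1 else 0))"
    proof (rule sum_mono)
      fix Z assume Z: "Z \<in> Pow P"
      have "\<forall>t\<in>T. Z \<inter> up P le t \<noteq> {}" if "A \<subseteq> dn Z"
      proof
        fix t assume "t \<in> T"
        then have "t \<in> dn Z" using that T(1) by auto
        then obtain z where "z \<in> Z" "le t z" unfolding dn_def by auto
        then show "Z \<inter> up P le t \<noteq> {}" using Z unfolding up_def by auto
      qed
      then show "wt b P Z * (if A \<subseteq> dn Z then 1 else 0)
          \<le> wt b P Z * (if \<forall>t\<in>T. Z \<inter> up P le t \<noteq> {} then 1 else 0)"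
        using wt_nonneg[OF less_imp_le[OF bpos] ble, of P Z] by auto
    qed
    also have "\<dots> = (\<Prod>t\<in>T. 1 - b ^ card (up P le t))"
    proof (rule wt_hit[OF fT assms(1)])
      show "\<forall>t\<in>T. up P le t \<subseteq> P" unfolding up_def by auto
      show "\<forall>t\<in>T. \<forall>t'\<in>T. t \<noteq> t' \<longrightarrow> up P le t \<inter> up P le t' = {}" using T(2) by blast
    qed
    also have "\<dots> \<le> (\<Prod>t\<in>T. 1/2)"
    proof (rule prod_mono)
      fix t assume "t \<in> T"
      then have tP: "t \<in> P" using TP by auto
      have "b ^ card (up P le t) \<le> 1" using bpos ble by (simp add: power_le_one)
      moreover have "b ^ m \<le> b ^ card (up P le t)"
        using upm[OF tP] bpos ble by (intro power_decreasing) auto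
      ultimately show "0 \<le> 1 - b ^ card (up P le t) \<and> 1 - b ^ card (up P le t) \<le> 1/2"
        using bm by simp
    qed
    also have "\<dots> = (1/2) powr real (card T)" by (simp add: powr_realpow)
    also have "\<dots> < 1 / real N"
    proof (rule halfL)
      have "(real m)^2 * L < real (card A)" by (rule hA[OF that])
      also have "\<dots> \<le> (real m)^2 * real (card T)"
        using T(3) by (simp add: power2_eq_square) (metis of_nat_le_iff of_nat_mult)
      finally show "L < real (card T)" using mpos by simp
    qed
    finally show ?thesis .
  qed
  have key: "1 \<le> (\<Sum>A\<in>\<A>. if A \<subseteq> dn Z then 1 else 0) + (\<Sum>B\<in>\<B>. if Z \<subseteq> B then 1 else (0::real))"
    if "Z \<in> Pow P" for Z
  proof -
    have "is_downset P le (dn Z)"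
      unfolding is_downset_def dn_def using that trans by blast
    moreover have "\<forall>X. is_downset P le X \<longrightarrow> (\<exists>B\<in>\<B>. X \<subseteq> B) \<or> (\<exists>A\<in>\<A>. A \<subseteq> X)"
      using assms(9) unfolding dual_over_def by (rule conjunct2)
    ultimately have d: "(\<exists>B\<in>\<B>. dn Z \<subseteq> B) \<or> (\<exists>A\<in>\<A>. A \<subseteq> dn Z)" by blast
    have "Z \<subseteq> dn Z" using that refl unfolding dn_def by blast
    then have "(\<exists>B\<in>\<B>. Z \<subseteq> B) \<or> (\<exists>A\<in>\<A>. A \<subseteq> dn Z)"
      using d by (meson subset_trans)
    then show ?thesis
    proof
      assume "\<exists>B\<in>\<B>. Z \<subseteq> B"
      then obtain B where "B \<in> \<B>" "Z \<subseteq> B" by blast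
      then have "1 \<le> (\<Sum>B\<in>\<B>. if Z \<subseteq> B then 1 else (0::real))"
        using member_le_sum[of B \<B> "\<lambda>B. if Z \<subseteq> B then 1 else (0::real)"] fB by auto
      moreover have "0 \<le> (\<Sum>A\<in>\<A>. if A \<subseteq> dn Z then 1 else (0::real))" by (rule sum_nonneg) auto
      ultimately show ?thesis by linarith
    next
      assume "\<exists>A\<in>\<A>. A \<subseteq> dn Z"
      then obtain A where "A \<in> \<A>" "A \<subseteq> dn Z" by blast
      then have "1 \<le> (\<Sum>A\<in>\<A>. if A \<subseteq> dn Z then 1 else (0::real))"
        using member_le_sum[of A \<A> "\<lambda>A. if A \<subseteq> dn Z then 1 else (0::real)"] fA by auto
      moreover have "0 \<le> (\<Sum>B\<in>\<B>. if Z \<subseteq> B then 1 else (0::real))" by (rule sum_nonneg) auto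
      ultimately show ?thesis by linarith
    qed
  qed
  have "1 = (\<Sum>Z\<in>Pow P. wt b P Z)" using wt_sum1[OF assms(1)] by simp
  also have "\<dots> \<le> (\<Sum>Z\<in>Pow P. wt b P Z * ((\<Sum>A\<in>\<A>. if A \<subseteq> dn Z then 1 else 0) + (\<Sum>B\<in>\<B>. if Z \<subseteq> B then 1 else 0)))"
  proof (rule sum_mono)
    fix Z assume "Z \<in> Pow P"
    then show "wt b P Z \<le> wt b P Z * ((\<Sum>A\<in>\<A>. if A \<subseteq> dn Z then 1 else 0) + (\<Sum>B\<in>\<B>. if Z \<subseteq> B then 1 else 0))"
      using key wt_nonneg[OF less_imp_le[OF bpos] ble, of P Z]
      by (metis mult.right_neutral mult_left_mono)
  qed
  also have "\<dots> = (\<Sum>A\<in>\<A>. \<Sum>Z\<in>Pow P. wt b P Z * (if A \<subseteq> dn Z then 1 else 0)) +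
                  (\<Sum>B\<in>\<B>. \<Sum>Z\<in>Pow P. wt b P Z * (if Z \<subseteq> B then 1 else 0))"
    by (simp add: distrib_left sum.distrib sum_distrib_left sum.swap[of _ "Pow P"])
  also have "\<dots> < (\<Sum>A\<in>\<A>. 1 / real N) + (\<Sum>B\<in>\<B>. 1 / real N)"
    by (intro add_strict_mono sum_strict_mono fA fB assms(7,8) WA VB)
  also have "\<dots> = (real (card \<A>) + real (card \<B>)) / real N" by (simp add: add_divide_distrib)
  also have "\<dots> = 1" using assms(10) N2 by simp
  finally show False by simp
qed

end
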